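(* Let $\mathcal{M}=(M_\sigma)$ be a linkage $(n,d)$-tope field of type $v=(v_1,\dots,v_d)$ and thickness $k<n$, let $\tau\subseteq L$ be a $(k+1)$-subset and let $C$ be the linkage covector on $\tau\sqcup R$. Then for each $r_i\in R$ there are exactly $v_i+1$ nodes adjacent to $r_i$ in $C$. Furthermore, for each $\ell_j\in\tau$, $C$ contains the tope $M_{\tau\setminus\{\ell_j\}}$ of the tope field, and it is the unique subgraph of $C$ which is a tope with right degree vector $v$ in which $\ell_j$ is isolated (i.e. with left degree vector $\mathbf{1}_{\tau\setminus\{\ell_j\}}$).
   Context: $L=\{\ell_1,\dots,\ell_n\}$, $R=\{r_1,\dots,r_d\}$; graphs are bipartite on $L\sqcup R$, identified with edge sets. For $v\in\mathbb{Z}_{>0}^d$ with $k=\sum v_i\le n$ and a $k$-subset $\sigma\subseteq L$, a tope of type $v$ on $\sigma$ is a graph whose left degree vector is the indicator vector $\mathbf{1}_\sigma$ and whose right degree vector is $v$. An $(n,d)$-tope field of type $v$ (thickness $k$) is a family $(M_\sigma)$ with one tope $M_\sigma$ of type $v$ on $\sigma$ for each $k$-subset $\sigma\subseteq L$. It is linkage if for every $(k+1)$-subset $\tau\subseteq L$, the union $C_\tau$ of the topes $M_\sigma$, $\sigma\subset\tau$, is a tree on the node set $\tau\sqcup R$; $C_\tau$ is called the linkage covector on $\tau$. *)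

theory Defs
  imports Main
begin

text \<open>Conventions: left nodes l_j are indexed by j in {0..<n}, right nodes r_i by
  i in {0..<d}. A bipartite graph on L + R is identified with its edge set,
  a set of pairs (j, i) meaning the edge l_j -- r_i. As abstract vertices we use
  Inl j for l_j and Inr i for r_i.\<close>

type_synonym bgraph = "(nat \<times> nat) set"

definition ldeg :: "bgraph \<Rightarrow> nat \<Rightarrow> nat" where
  "ldeg G j = card {i. (j, i) \<in> G}"

definition rdeg :: "bgraph \<Rightarrow> nat \<Rightarrow> nat" where
  "rdeg G i = card {j. (j, i) \<in> G}"

definition is_bgraph :: "nat \<Rightarrow> nat \<Rightarrow> bgraph \<Rightarrow> bool" where
  "is_bgraph n d G \<longleftrightarrow> G \<subseteq> {0..<n} \<times> {0..<d}"

definition is_tope :: "nat \<Rightarrow> nat \<Rightarrow> (nat \<Rightarrow> nat) \<Rightarrow> nat set \<Rightarrow> bgraph \<Rightarrow> bool" where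
  "is_tope n d v \<sigma> G \<longleftrightarrow> is_bgraph n d G
     \<and> (\<forall>j<n. ldeg G j = (if j \<in> \<sigma> then 1 else 0))
     \<and> (\<forall>i<d. rdeg G i = v i)"

text \<open>(n,d)-tope field of type v and thickness k = sum of v.\<close>
definition is_tope_field :: "nat \<Rightarrow> nat \<Rightarrow> (nat \<Rightarrow> nat) \<Rightarrow> (nat set \<Rightarrow> bgraph) \<Rightarrow> bool" where
  "is_tope_field n d v M \<longleftrightarrow>
     (\<forall>i<d. v i > 0) \<and> (\<Sum>i<d. v i) \<le> n \<and>
     (\<forall>\<sigma>. \<sigma> \<subseteq> {0..<n} \<and> card \<sigma> = (\<Sum>i<d. v i) \<longrightarrow> is_tope n d v \<sigma> (M \<sigma>))"

definition badj :: "bgraph \<Rightarrow> nat + nat \<Rightarrow> nat + nat \<Rightarrow> bool" where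
  "badj G x y \<longleftrightarrow> (\<exists>j i. (j, i) \<in> G \<and>
      ((x = Inl j \<and> y = Inr i) \<or> (x = Inr i \<and> y = Inl j)))"

definition has_cycle :: "bgraph \<Rightarrow> bool" where
  "has_cycle G \<longleftrightarrow> (\<exists>xs. length xs \<ge> 3 \<and> distinct xs
      \<and> (\<forall>t < length xs. badj G (xs ! t) (xs ! ((t + 1) mod length xs))))"

definition is_tree_on :: "(nat + nat) set \<Rightarrow> bgraph \<Rightarrow> bool" where
  "is_tree_on V G \<longleftrightarrow> V \<noteq> {}
     \<and> (\<forall>j i. (j, i) \<in> G \<longrightarrow> Inl j \<in> V \<and> Inr i \<in> V)
     \<and> (\<forall>x\<in>V. \<forall>y\<in>V. (x, y) \<in> {(a, b). badj G a b}\<^sup>*)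
     \<and> \<not> has_cycle G"

definition linkage_covector :: "nat \<Rightarrow> (nat set \<Rightarrow> bgraph) \<Rightarrow> nat set \<Rightarrow> bgraph" where
  "linkage_covector k M \<tau> = (\<Union>\<sigma>\<in>{\<sigma>. \<sigma> \<subseteq> \<tau> \<and> card \<sigma> = k}. M \<sigma>)"

definition is_linkage_tope_field :: "nat \<Rightarrow> nat \<Rightarrow> (nat \<Rightarrow> nat) \<Rightarrow> (nat set \<Rightarrow> bgraph) \<Rightarrow> bool" where
  "is_linkage_tope_field n d v M \<longleftrightarrow> is_tope_field n d v M \<and>
     (\<forall>\<tau>. \<tau> \<subseteq> {0..<n} \<and> card \<tau> = (\<Sum>i<d. v i) + 1 \<longrightarrow>
        is_tree_on (Inl ` \<tau> \<union> Inr ` {0..<d}) (linkage_covector (\<Sum>i<d. v i) M \<tau>))"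

end

theory Submission
  imports Defs
begin

lemma badj_sym: "badj G x y = badj G y x"
  unfolding badj_def by blast

lemma badj_irrefl: "\<not> badj G x x"
  unfolding badj_def by auto

lemma has_cycle_mono: "has_cycle G \<Longrightarrow> G \<subseteq> G' \<Longrightarrow> has_cycle G'"
  unfolding has_cycle_def badj_def by blast

definition bpath :: "bgraph \<Rightarrow> (nat + nat) list \<Rightarrow> bool" where
  "bpath G xs \<longleftrightarrow> distinct xs \<and> length xs \<ge> 2 \<and>
     (\<forall>t. Suc t < length xs \<longrightarrow> badj G (xs ! t) (xs ! Suc t))"

lemma badj_in_V: "badj G x y \<Longrightarrow> x \<in> Inl ` fst ` G \<union> Inr ` snd ` G"
  unfolding badj_def by force

lemma leaf_exists:
  assumes "finite G" "G \<noteq> {}" "\<not> has_cycle G"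
  shows "(\<exists>a b. {i. (a,i)\<in>G} = {b} \<and> (a,b) \<in> G) \<or> (\<exists>a b. {j. (j,b)\<in>G} = {a} \<and> (a,b)\<in>G)"
proof -
  define V where "V = Inl ` fst ` G \<union> Inr ` snd ` G"
  have fV: "finite V" using assms(1) unfolding V_def by auto
  obtain a0 b0 where ab0: "(a0,b0) \<in> G" using assms(2) by auto
  have p0: "bpath G [Inl a0, Inr b0]"
    unfolding bpath_def badj_def using ab0 by (auto simp: less_Suc_eq)
  have bnd: "\<forall>ys. bpath G ys \<longrightarrow> length ys < Suc (card V)"
  proof (intro allI impI)
    fix ys assume "bpath G ys"
    hence d: "distinct ys" and l: "length ys \<ge> 2" and adj: "\<forall>t. Suc t < length ys \<longrightarrow> badj G (ys ! t) (ys ! Suc t)"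
      unfolding bpath_def by auto
    have "set ys \<subseteq> V"
    proof
      fix x assume "x \<in> set ys"
      then obtain t where t: "t < length ys" "ys ! t = x" by (auto simp: in_set_conv_nth)
      show "x \<in> V"
      proof (cases "Suc t < length ys")
        case True
        hence "badj G (ys ! t) (ys ! Suc t)" using adj by blast
        from badj_in_V[OF this] show ?thesis using t unfolding V_def by simp
      next
        case False
        hence "Suc (t - 1) < length ys" "Suc (t-1) = t" using t l by auto
        hence "badj G (ys ! (t-1)) (ys ! t)" using adj by metis
        hence "badj G (ys ! t) (ys ! (t-1))" using badj_sym by metis
        from badj_in_V[OF this] show ?thesis using t unfolding V_def by simp
      qed
    qed
    hence "card (set ys) \<le> card V" using fV card_mono by blast
    thus "length ys < Suc (card V)" using distinct_card[OF d] by simp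
  qed
  obtain xs where xs: "bpath G xs" and mx: "\<forall>ys. bpath G ys \<longrightarrow> length ys \<le> length xs"
    using ex_has_greatest_nat[where P="bpath G" and f=length, OF p0 bnd] by blast
  have d: "distinct xs" and l: "length xs \<ge> 2" and adj: "\<forall>t. Suc t < length xs \<longrightarrow> badj G (xs ! t) (xs ! Suc t)"
    using xs unfolding bpath_def by auto
  have nb: "\<And>y. badj G (xs!0) y \<Longrightarrow> y = xs ! 1"
  proof -
    fix y assume y: "badj G (xs!0) y"
    show "y = xs ! 1"
    proof (cases "y \<in> set xs")
      case False
      have "bpath G (y # xs)"
        unfolding bpath_def
      proof (intro conjI allI impI)
        show "distinct (y # xs)" using d False by simp
        show "2 \<le> length (y # xs)" using l by simp
        fix t assume "Suc t < length (y # xs)"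
        thus "badj G ((y # xs) ! t) ((y # xs) ! Suc t)"
          using y adj badj_sym by (cases t) auto
      qed
      thus ?thesis using mx by fastforce
    next
      case True
      then obtain t where t: "t < length xs" "xs ! t = y" by (auto simp: in_set_conv_nth)
      show ?thesis
      proof (cases "t \<ge> 2")
        case False
        moreover have "t \<noteq> 0" using t y badj_irrefl by metis
        ultimately have "t = 1" by simp
        thus ?thesis using t by simp
      next
        case True
        define ys where "ys = take (Suc t) xs"
        have "has_cycle G"
          unfolding has_cycle_def
        proof (intro exI[of _ ys] conjI allI impI)
          show "3 \<le> length ys" using True t unfolding ys_def by simp
          show "distinct ys" using d unfolding ys_def by simp
          fix s assume s: "s < length ys"
          hence sl: "s \<le> t" using t unfolding ys_def by simp
          have ly: "length ys = Suc t" using t unfolding ys_def by simp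
          show "badj G (ys ! s) (ys ! ((s + 1) mod length ys))"
          proof (cases "s = t")
            case True
            thus ?thesis using ly y t badj_sym unfolding ys_def by simp
          next
            case False
            hence "(s+1) mod length ys = Suc s" using sl ly by simp
            thus ?thesis using adj sl False t unfolding ys_def by simp
          qed
        qed
        thus ?thesis using assms(3) by blast
      qed
    qed
  qed
  have a1: "badj G (xs!0) (xs!1)" using adj l by simp
  then obtain j i where ji: "(j,i) \<in> G" "(xs!0 = Inl j \<and> xs!1 = Inr i) \<or> (xs!0 = Inr i \<and> xs!1 = Inl j)"
    unfolding badj_def by blast
  from ji(2) show ?thesis
  proof
    assume h: "xs!0 = Inl j \<and> xs!1 = Inr i"
    have "{i'. (j,i')\<in>G} = {i}"
    proof (intro set_eqI iffI)
      fix i' assume "i' \<in> {i'. (j,i')\<in>G}"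
      hence "badj G (xs!0) (Inr i')" using h unfolding badj_def by auto
      thus "i' \<in> {i}" using nb h by fastforce
    qed (use ji in auto)
    thus ?thesis using ji by blast
  next
    assume h: "xs!0 = Inr i \<and> xs!1 = Inl j"
    have "{j'. (j',i)\<in>G} = {j}"
    proof (intro set_eqI iffI)
      fix j' assume "j' \<in> {j'. (j',i)\<in>G}"
      hence "badj G (xs!0) (Inl j')" using h unfolding badj_def by auto
      thus "j' \<in> {j}" using nb h by fastforce
    qed (use ji in auto)
    thus ?thesis using ji by blast
  qed
qed

lemma forest_bound:
  "finite A \<Longrightarrow> finite B \<Longrightarrow> G \<subseteq> A \<times> B \<Longrightarrow> \<not> has_cycle G \<Longrightarrow> A \<noteq> {} \<or> B \<noteq> {}
   \<Longrightarrow> card G < card A + card B"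
proof (induction "card G" arbitrary: A B G)
  case 0
  thus ?case by (simp add: card_gt_0_iff)
next
  case (Suc N)
  have fG: "finite G" using Suc.prems(1,2,3) finite_subset by blast
  hence "G \<noteq> {}" using Suc.hyps(2) by auto
  from leaf_exists[OF fG this Suc.prems(4)] show ?case
  proof
    assume "\<exists>a b. {i. (a,i)\<in>G} = {b} \<and> (a,b) \<in> G"
    then obtain a b where ab: "{i. (a,i)\<in>G} = {b}" "(a,b)\<in>G" by blast
    define G' where "G' = G - {(a,b)}"
    have cG: "card G = Suc (card G')" using card_Suc_Diff1[OF fG ab(2)] unfolding G'_def
      by simp
    have sub: "G' \<subseteq> (A - {a}) \<times> B"
    proof
      fix e assume e: "e \<in> G'"
      obtain x y where xy: "e = (x,y)" by fastforce
      have "x \<noteq> a"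
      proof
        assume "x = a"
        hence "y \<in> {i. (a,i)\<in>G}" using e xy unfolding G'_def by auto
        thus False using ab e xy \<open>x = a\<close> unfolding G'_def by auto
      qed
      thus "e \<in> (A - {a}) \<times> B" using e xy Suc.prems(3) unfolding G'_def by auto
    qed
    have "\<not> has_cycle G'" using Suc.prems(4) has_cycle_mono unfolding G'_def by blast
    moreover have "B \<noteq> {}" using ab Suc.prems(3) by auto
    ultimately have "card G' < card (A - {a}) + card B"
      using Suc.hyps(1)[of G' "A - {a}" B] cG Suc.hyps(2) Suc.prems(1,2) sub by auto
    moreover have "a \<in> A" using ab Suc.prems(3) by auto
    moreover have "card A > 0" using \<open>a \<in> A\<close> Suc.prems(1) card_gt_0_iff by blast
    ultimately show ?thesis using cG Suc.prems(1)
      by (simp add: card_Diff_singleton)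
  next
    assume "\<exists>a b. {j. (j,b)\<in>G} = {a} \<and> (a,b)\<in>G"
    then obtain a b where ab: "{j. (j,b)\<in>G} = {a}" "(a,b)\<in>G" by blast
    define G' where "G' = G - {(a,b)}"
    have cG: "card G = Suc (card G')" using card_Suc_Diff1[OF fG ab(2)] unfolding G'_def
      by simp
    have sub: "G' \<subseteq> A \<times> (B - {b})"
    proof
      fix e assume e: "e \<in> G'"
      obtain x y where xy: "e = (x,y)" by fastforce
      have "y \<noteq> b"
      proof
        assume "y = b"
        hence "x \<in> {j. (j,b)\<in>G}" using e xy unfolding G'_def by auto
        thus False using ab e xy \<open>y = b\<close> unfolding G'_def by auto
      qed
      thus "e \<in> A \<times> (B - {b})" using e xy Suc.prems(3) unfolding G'_def by auto
    qed
    have "\<not> has_cycle G'" using Suc.prems(4) has_cycle_mono unfolding G'_def by blast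
    moreover have "A \<noteq> {}" using ab Suc.prems(3) by auto
    ultimately have "card G' < card A + card (B - {b})"
      using Suc.hyps(1)[of G' A "B - {b}"] cG Suc.hyps(2) Suc.prems(1,2) sub by auto
    moreover have "b \<in> B" using ab Suc.prems(3) by auto
    moreover have "card B > 0" using \<open>b \<in> B\<close> Suc.prems(2) card_gt_0_iff by blast
    ultimately show ?thesis using cG Suc.prems(2)
      by (simp add: card_Diff_singleton)
  qed
qed

lemma tope_fun:
  assumes "is_tope n d v \<sigma> G" "\<sigma> \<subseteq> {0..<n}"
  shows "\<exists>g. G = (\<lambda>l. (l, g l)) ` \<sigma> \<and> (\<forall>l\<in>\<sigma>. g l < d)"
proof -
  have bg: "G \<subseteq> {0..<n} \<times> {0..<d}" and ld: "\<forall>j<n. ldeg G j = (if j \<in> \<sigma> then 1 else 0)"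
    using assms(1) unfolding is_tope_def is_bgraph_def by auto
  have fin: "\<And>l. finite {i. (l,i)\<in>G}"
    by (rule finite_subset[of _ "{0..<d}"]) (use bg in auto)
  have "\<forall>l\<in>\<sigma>. \<exists>b. {i. (l,i)\<in>G} = {b}"
  proof
    fix l assume "l \<in> \<sigma>"
    hence "card {i. (l,i)\<in>G} = 1" using ld assms(2) unfolding ldeg_def by auto
    thus "\<exists>b. {i. (l,i)\<in>G} = {b}" by (simp add: card_1_singleton_iff)
  qed
  from bchoice[OF this] obtain g where g: "\<forall>l\<in>\<sigma>. {i. (l,i)\<in>G} = {g l}" by blast
  have out: "\<And>x y. (x,y) \<in> G \<Longrightarrow> x \<in> \<sigma>"
  proof (rule ccontr)
    fix x y assume xy: "(x,y)\<in>G" "x \<notin> \<sigma>"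
    hence "x < n" using bg by auto
    hence "card {i. (x,i)\<in>G} = 0" using ld xy(2) unfolding ldeg_def by auto
    hence "{i. (x,i)\<in>G} = {}" using fin by simp
    thus False using xy by auto
  qed
  have "G = (\<lambda>l. (l, g l)) ` \<sigma>"
  proof (intro set_eqI iffI)
    fix e assume e: "e \<in> G"
    obtain x y where xy: "e = (x,y)" by fastforce
    have "x \<in> \<sigma>" using out e xy by blast
    moreover have "y \<in> {i. (x,i)\<in>G}" using e xy by simp
    ultimately have "y = g x" using g by auto
    have "x \<in> \<sigma>" using out e xy by blast
    thus "e \<in> (\<lambda>l. (l, g l)) ` \<sigma>" using xy \<open>y = g x\<close> by auto
  next
    fix e assume "e \<in> (\<lambda>l. (l, g l)) ` \<sigma>"
    then obtain l where "l \<in> \<sigma>" "e = (l, g l)" by auto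
    thus "e \<in> G" using g by blast
  qed
  moreover have "\<forall>l\<in>\<sigma>. g l < d" using calculation bg by auto
  ultimately show ?thesis by blast
qed

lemma uniq:
  assumes fs: "finite \<sigma>" and gd: "\<forall>l\<in>\<sigma>. g l < d" and md: "\<forall>l\<in>\<sigma>. m l < d"
    and bal: "\<forall>r<d. card {l\<in>\<sigma>. g l = r} = card {l\<in>\<sigma>. m l = r}"
    and sub: "(\<lambda>l. (l, g l)) ` \<sigma> \<union> (\<lambda>l. (l, m l)) ` \<sigma> \<subseteq> C"
    and ac: "\<not> has_cycle C"
  shows "\<forall>l\<in>\<sigma>. g l = m l"
proof (rule ccontr)
  define D where "D = {l\<in>\<sigma>. g l \<noteq> m l}"
  assume "\<not> (\<forall>l\<in>\<sigma>. g l = m l)"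
  hence Dne: "D \<noteq> {}" unfolding D_def by auto
  have fD: "finite D" using fs unfolding D_def by auto
  have bD: "\<And>r. r < d \<Longrightarrow> card {l\<in>D. g l = r} = card {l\<in>D. m l = r}"
  proof -
    fix r assume r: "r < d"
    have e1: "{l\<in>\<sigma>. g l = r} = {l\<in>D. g l = r} \<union> {l\<in>\<sigma>-D. m l = r}" unfolding D_def by auto
    have e2: "{l\<in>\<sigma>. m l = r} = {l\<in>D. m l = r} \<union> {l\<in>\<sigma>-D. m l = r}" unfolding D_def by auto
    have c1: "card {l\<in>\<sigma>. g l = r} = card {l\<in>D. g l = r} + card {l\<in>\<sigma>-D. m l = r}"
      unfolding e1 by (rule card_Un_disjoint) (use fs fD in auto)
    have c2: "card {l\<in>\<sigma>. m l = r} = card {l\<in>D. m l = r} + card {l\<in>\<sigma>-D. m l = r}"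
      unfolding e2 by (rule card_Un_disjoint) (use fs fD in auto)
    show "card {l\<in>D. g l = r} = card {l\<in>D. m l = r}" using c1 c2 bal r by simp
  qed
  have mg: "m ` D \<subseteq> g ` D"
  proof
    fix r assume "r \<in> m ` D"
    then obtain l where l: "l \<in> D" "r = m l" by auto
    hence "r < d" using md unfolding D_def by auto
    have "{l\<in>D. m l = r} \<noteq> {}" using l by auto
    moreover have "finite {l\<in>D. m l = r}" using fD by simp
    ultimately have "card {l\<in>D. m l = r} > 0" by (simp add: card_gt_0_iff)
    hence "card {l\<in>D. g l = r} > 0" using bD[OF \<open>r < d\<close>] by simp
    hence "{l\<in>D. g l = r} \<noteq> {}" by (metis card.empty less_irrefl)
    then obtain l' where "l' \<in> D" "g l' = r" by blast
    thus "r \<in> g ` D" by auto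
  qed
  define H where "H = (\<lambda>l. (l, g l)) ` D \<union> (\<lambda>l. (l, m l)) ` D"
  have HS: "H \<subseteq> D \<times> g ` D" unfolding H_def using mg by auto
  have "H \<subseteq> C" using sub unfolding H_def D_def by auto
  hence Hac: "\<not> has_cycle H" using ac has_cycle_mono by blast
  have "card H = card ((\<lambda>l. (l, g l)) ` D) + card ((\<lambda>l. (l, m l)) ` D)"
  proof -
    have "(\<lambda>l. (l, g l)) ` D \<inter> (\<lambda>l. (l, m l)) ` D = {}"
      unfolding D_def by auto
    thus ?thesis unfolding H_def using fD by (simp add: card_Un_disjoint)
  qed
  also have "\<dots> = card D + card D"
    by (simp add: card_image inj_on_def)
  finally have cH: "card H = card D + card D" .
  have "card H < card D + card (g ` D)"
    using forest_bound[OF fD finite_imageI[OF fD] HS Hac] Dne by blast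
  moreover have "card (g ` D) \<le> card D" by (rule card_image_le[OF fD])
  ultimately show False using cH by linarith
qed


theorem lemma3p10:
  fixes n d :: nat and v :: "nat \<Rightarrow> nat" and M :: "nat set \<Rightarrow> bgraph" and \<tau> :: "nat set"
  assumes "is_linkage_tope_field n d v M"
    and "(\<Sum>i<d. v i) < n"
    and "\<tau> \<subseteq> {0..<n}" and "card \<tau> = (\<Sum>i<d. v i) + 1"
  shows "(\<forall>i<d. card {j. badj (linkage_covector (\<Sum>i<d. v i) M \<tau>) (Inr i) (Inl j)} = v i + 1)
    \<and> (\<forall>j\<in>\<tau>. M (\<tau> - {j}) \<subseteq> linkage_covector (\<Sum>i<d. v i) M \<tau>
        \<and> (\<forall>G. G \<subseteq> linkage_covector (\<Sum>i<d. v i) M \<tau> \<and> is_tope n d v (\<tau> - {j}) G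
              \<longrightarrow> G = M (\<tau> - {j})))"
proof -
  define k where "k = (\<Sum>i<d. v i)"
  define C where "C = linkage_covector k M \<tau>"
  have vpos: "\<forall>i<d. v i > 0" and tf: "\<forall>\<sigma>. \<sigma> \<subseteq> {0..<n} \<and> card \<sigma> = k \<longrightarrow> is_tope n d v \<sigma> (M \<sigma>)"
    using assms(1) unfolding is_linkage_tope_field_def is_tope_field_def k_def by auto
  have tree: "is_tree_on (Inl ` \<tau> \<union> Inr ` {0..<d}) C"
    using assms(1,3,4) unfolding is_linkage_tope_field_def C_def k_def by auto
  have edges: "\<And>j i. (j,i) \<in> C \<Longrightarrow> j \<in> \<tau> \<and> i < d"
  proof -
    fix j i assume "(j,i) \<in> C"
    hence "Inl j \<in> Inl ` \<tau> \<union> Inr ` {0..<d}" "Inr i \<in> Inl ` \<tau> \<union> Inr ` {0..<d}"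
      using tree unfolding is_tree_on_def by blast+
    thus "j \<in> \<tau> \<and> i < d" by auto
  qed
  have ac: "\<not> has_cycle C" using tree unfolding is_tree_on_def by auto
  have ft: "finite \<tau>" using assms(3) finite_subset by blast
  have cardt: "card \<tau> = k + 1" using assms(4) k_def by simp
  hence tne: "\<tau> \<noteq> {}" by auto
  have CS: "C \<subseteq> \<tau> \<times> {0..<d}" using edges by auto
  have fC: "finite C" using CS ft finite_subset by blast
  have topes: "\<And>j. j \<in> \<tau> \<Longrightarrow> is_tope n d v (\<tau> - {j}) (M (\<tau> - {j})) \<and> M (\<tau> - {j}) \<subseteq> C"
  proof -
    fix j assume j: "j \<in> \<tau>"
    have c: "card (\<tau> - {j}) = k" using cardt j ft by simp
    have s: "\<tau> - {j} \<subseteq> {0..<n}" using assms(3) by auto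
    have "M (\<tau> - {j}) \<subseteq> C" unfolding C_def linkage_covector_def using c by blast
    thus "is_tope n d v (\<tau> - {j}) (M (\<tau> - {j})) \<and> M (\<tau> - {j}) \<subseteq> C" using tf c s by blast
  qed
  define N where "N i = {j. (j,i) \<in> C}" for i
  have fN: "\<And>i. finite (N i)" unfolding N_def by (rule finite_subset[OF _ ft]) (use edges in auto)
  have lower: "\<And>i. i < d \<Longrightarrow> v i + 1 \<le> card (N i)"
  proof -
    fix i assume i: "i < d"
    obtain j0 where j0: "j0 \<in> \<tau>" using tne by auto
    have "rdeg (M (\<tau> - {j0})) i = v i" using topes[OF j0] i unfolding is_tope_def by auto
    hence "card {l. (l,i) \<in> M (\<tau> - {j0})} > 0" using vpos i unfolding rdeg_def by auto
    then obtain l0 where "(l0,i) \<in> M (\<tau> - {j0})" by (metis (no_types, lifting) card.empty empty_Collect_eq less_irrefl)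
    hence jN: "l0 \<in> N i" using topes[OF j0] unfolding N_def by auto
    hence l0t: "l0 \<in> \<tau>" using edges unfolding N_def by auto
    define Ms where "Ms = M (\<tau> - {l0})"
    have tp: "is_tope n d v (\<tau> - {l0}) Ms" and MsC: "Ms \<subseteq> C" using topes[OF l0t] unfolding Ms_def by auto
    have l0n: "l0 < n" using l0t assms(3) by auto
    have "ldeg Ms l0 = 0" using tp l0n unfolding is_tope_def by auto
    moreover have "finite {i'. (l0,i') \<in> Ms}"
      by (rule finite_subset[of _ "{0..<d}"]) (use tp in \<open>auto simp: is_tope_def is_bgraph_def\<close>)
    ultimately have noe: "{i'. (l0,i') \<in> Ms} = {}" unfolding ldeg_def by simp
    have "{l. (l,i) \<in> Ms} \<subseteq> N i - {l0}" using MsC noe unfolding N_def by auto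
    hence "card {l. (l,i) \<in> Ms} \<le> card (N i - {l0})" using fN by (simp add: card_mono)
    moreover have "card {l. (l,i) \<in> Ms} = v i" using tp i unfolding is_tope_def rdeg_def by auto
    moreover have "card (N i - {l0}) = card (N i) - 1" using jN fN by simp
    moreover have "card (N i) > 0" using jN fN card_gt_0_iff by blast
    ultimately show "v i + 1 \<le> card (N i)" by linarith
  qed
  have cardC: "card C = (\<Sum>i<d. card (N i))"
  proof -
    have "C = (\<Union>i\<in>{..<d}. (\<lambda>j. (j,i)) ` N i)" using edges unfolding N_def by auto
    hence "card C = (\<Sum>i\<in>{..<d}. card ((\<lambda>j. (j,i)) ` N i))"
      using fN by (simp only:) (rule card_UN_disjoint, auto)
    also have "\<dots> = (\<Sum>i<d. card (N i))" by (simp add: card_image inj_on_def)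
    finally show ?thesis .
  qed
  have "card C < card \<tau> + card {0..<d}" using forest_bound[OF ft _ CS ac] tne by auto
  hence cC: "card C \<le> k + d" using cardt by simp
  have part1: "\<forall>i<d. card (N i) = v i + 1"
  proof (rule ccontr)
    assume "\<not> (\<forall>i<d. card (N i) = v i + 1)"
    then obtain i0 where "i0 < d" "card (N i0) \<noteq> v i0 + 1" by blast
    hence "\<exists>a\<in>{..<d}. v a + 1 < card (N a)" using lower by force
    hence "(\<Sum>i<d. v i + 1) < (\<Sum>i<d. card (N i))"
      using lower by (intro sum_strict_mono_ex1) auto
    moreover have "(\<Sum>i<d. v i + 1) = k + d" unfolding k_def by (simp only: sum.distrib) simp
    ultimately show False using cC cardC by linarith
  qed
  have eqN: "\<And>i. {j. badj C (Inr i) (Inl j)} = N i" unfolding badj_def N_def by auto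
  have part2: "\<forall>j\<in>\<tau>. \<forall>G. G \<subseteq> C \<and> is_tope n d v (\<tau> - {j}) G \<longrightarrow> G = M (\<tau> - {j})"
  proof (intro ballI allI impI)
    fix j G assume j: "j \<in> \<tau>" and G: "G \<subseteq> C \<and> is_tope n d v (\<tau> - {j}) G"
    define \<sigma> where "\<sigma> = \<tau> - {j}"
    have s: "\<sigma> \<subseteq> {0..<n}" using assms(3) unfolding \<sigma>_def by auto
    have fs: "finite \<sigma>" using ft unfolding \<sigma>_def by simp
    have tG: "is_tope n d v \<sigma> G" and GC: "G \<subseteq> C" using G unfolding \<sigma>_def by auto
    have tM: "is_tope n d v \<sigma> (M \<sigma>)" and MC: "M \<sigma> \<subseteq> C" using topes[OF j] unfolding \<sigma>_def by auto
    obtain g where g: "G = (\<lambda>l. (l, g l)) ` \<sigma>" "\<forall>l\<in>\<sigma>. g l < d" using tope_fun[OF tG s] by blast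
    obtain m where m: "M \<sigma> = (\<lambda>l. (l, m l)) ` \<sigma>" "\<forall>l\<in>\<sigma>. m l < d" using tope_fun[OF tM s] by blast
    have bal: "\<forall>r<d. card {l\<in>\<sigma>. g l = r} = card {l\<in>\<sigma>. m l = r}"
    proof (intro allI impI)
      fix r assume r: "r < d"
      have "{l. (l,r) \<in> G} = {l\<in>\<sigma>. g l = r}" using g(1) by auto
      moreover have "{l. (l,r) \<in> M \<sigma>} = {l\<in>\<sigma>. m l = r}" using m(1) by auto
      moreover have "rdeg G r = v r" "rdeg (M \<sigma>) r = v r" using tG tM r unfolding is_tope_def by auto
      ultimately show "card {l\<in>\<sigma>. g l = r} = card {l\<in>\<sigma>. m l = r}" unfolding rdeg_def by simp
    qed
    have "(\<lambda>l. (l, g l)) ` \<sigma> \<union> (\<lambda>l. (l, m l)) ` \<sigma> \<subseteq> C" using GC MC g(1) m(1) by auto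
    from uniq[OF fs g(2) m(2) bal this ac] have "\<forall>l\<in>\<sigma>. g l = m l" .
    hence "G = M \<sigma>" using g(1) m(1) by (auto intro!: image_cong)
    thus "G = M (\<tau> - {j})" unfolding \<sigma>_def .
  qed
  show ?thesis
    using part1 part2 topes unfolding C_def[symmetric] k_def[symmetric] eqN by blast
qed

end
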